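(* Let $B=\mathbb{C}\oplus\mathbb{C}$ be the $\mathbb{Z}_2$-graded Hilbert space with $B_0=\mathrm{span}\{\ket{0}\}$ and $B_1=\mathrm{span}\{\ket{1}\}$, and let $\mathbf{LFM}$ be the monoidal category whose objects are the tensor powers $B^{\otimes n}$, $n\in\mathbb{N}$, and whose morphisms are the pure maps between them. Let $T$ be the monoidal signature with operations $\mathsf{swap}:2\to 2$, $\mathsf{dual}:0\to 2$, $\mathsf{dual}^\dagger:2\to 0$, $\mathsf{fswap}:2\to 2$, $\mathsf{black}_2:0\to 2$, $\mathsf{black}_3:0\to 3$, and $\mathsf{white}_z:0\to 2$ for every $z\in\mathbb{C}$, let $F[T]$ be the free PRO on $T$, and let $f:F[T]\to\mathbf{LFM}$ be the strict monoidal functor sending the object $n$ to $B^{\otimes n}$ and the generators to the linear maps $\mathsf{swap}\mapsto(\ket{b_1b_2}\mapsto\ket{b_2b_1})$; $\mathsf{dual}\mapsto(1\mapsto\ket{00}+\ket{11})$; $\mathsf{dual}^\dagger\mapsto(\ket{b_1b_2}\mapsto 1$ if $b_1=b_2$, $0$ otherwise$)$; $\mathsf{fswap}\mapsto(\ket{00}\mapsto\ket{00},\ \ket{10}\mapsto\ket{01},\ \ket{01}\mapsto\ket{10},\ \ket{11}\mapsto-\ket{11})$; $\mathsf{black}_2\mapsto(1\mapsto\ket{10}+\ket{01})$; $\mathsf{black}_3\mapsto(1\mapsto\ket{100}+\ket{010}+\ket{001})$; $\mathsf{white}_z\mapsto(1\mapsto\ket{00}+z\ket{11})$. Then $f$ is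 full: for all $n,m\in\mathbb{N}$, every morphism $B^{\otimes n}\to B^{\otimes m}$ of $\mathbf{LFM}$ is equal to $f(d)$ for some morphism $d:n\to m$ of $F[T]$.
   Context: A $\mathbb{Z}_2$-graded Hilbert space is a complex Hilbert space $H$ with a decomposition $H=H_0\oplus H_1$. A pure map $g:H\to K$ between $\mathbb{Z}_2$-graded Hilbert spaces is a bounded linear map which is either even ($g(H_0)\subseteq K_0$ and $g(H_1)\subseteq K_1$) or odd ($g(H_0)\subseteq K_1$ and $g(H_1)\subseteq K_0$). The tensor product is graded by $(H\otimes K)_0=(H_0\otimes K_0)\oplus(H_1\otimes K_1)$ and $(H\otimes K)_1=(H_0\otimes K_1)\oplus(H_1\otimes K_0)$, with unit $\mathbb{C}\oplus 0$; tensor products of pure maps are pure. We write $\ket{b_1\ldots b_n}=\ket{b_1}\otimes\cdots\otimes\ket{b_n}$ for $b_i\in\{0,1\}$. A PRO is a strict monoidal category whose objects are the natural numbers with monoidal product given on objects by addition; for a monoidal signature (a set of operations $g_i:n_i\to m_i$), the free PRO $F[T]$ has as morphisms the formal sequential and parallel composites of the operations, modulo the axioms of strict monoidal categories (equivalently, string diagrams up to planar isotopy). Here $B^{\otimes 0}=\mathbb{C}$ and a map $\mathbb{C}\to B^{\otimes n}$ is specified by the image of $1$. *)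

theory Defs
  imports Complex_Main
begin

text \<open>A linear map B^{\<otimes>n} \<rightarrow> B^{\<otimes>m} is represented by its matrix in the
computational basis: a function taking an output bit string (length m) and
an input bit string (length n) to a complex coefficient. Bit 1 is True.\<close>

type_synonym lmap = "bool list \<Rightarrow> bool list \<Rightarrow> complex"

definition bitstrings :: "nat \<Rightarrow> bool list set" where
  "bitstrings k = {xs. length xs = k}"

definition weight :: "bool list \<Rightarrow> nat" where
  "weight xs = length (filter id xs)"

definition even_map :: "nat \<Rightarrow> nat \<Rightarrow> lmap \<Rightarrow> bool" where
  "even_map n m M \<longleftrightarrow> (\<forall>out inp. length out = m \<longrightarrow> length inp = n \<longrightarrow>
      M out inp \<noteq> 0 \<longrightarrow> (even (weight out) \<longleftrightarrow> even (weight inp)))"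

definition odd_map :: "nat \<Rightarrow> nat \<Rightarrow> lmap \<Rightarrow> bool" where
  "odd_map n m M \<longleftrightarrow> (\<forall>out inp. length out = m \<longrightarrow> length inp = n \<longrightarrow>
      M out inp \<noteq> 0 \<longrightarrow> (even (weight out) \<longleftrightarrow> odd (weight inp)))"

definition pure_map :: "nat \<Rightarrow> nat \<Rightarrow> lmap \<Rightarrow> bool" where
  "pure_map n m M \<longleftrightarrow> even_map n m M \<or> odd_map n m M"

datatype gen = Swap | Dual | DualDag | FSwap | Black2 | Black3 | White complex

fun gdom :: "gen \<Rightarrow> nat" where
  "gdom Swap = 2" | "gdom Dual = 0" | "gdom DualDag = 2" | "gdom FSwap = 2"
| "gdom Black2 = 0" | "gdom Black3 = 0" | "gdom (White z) = 0"

fun gcod :: "gen \<Rightarrow> nat" where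
  "gcod Swap = 2" | "gcod Dual = 2" | "gcod DualDag = 0" | "gcod FSwap = 2"
| "gcod Black2 = 2" | "gcod Black3 = 3" | "gcod (White z) = 2"

fun gmat :: "gen \<Rightarrow> lmap" where
  "gmat Swap [c1, c2] [b1, b2] = (if c1 = b2 \<and> c2 = b1 then 1 else 0)"
| "gmat Dual [c1, c2] [] = (if c1 = c2 then 1 else 0)"
| "gmat DualDag [] [b1, b2] = (if b1 = b2 then 1 else 0)"
| "gmat FSwap [c1, c2] [b1, b2] =
     (if c1 = b2 \<and> c2 = b1 then (if b1 \<and> b2 then -1 else 1) else 0)"
| "gmat Black2 [c1, c2] [] = (if weight [c1, c2] = 1 then 1 else 0)"
| "gmat Black3 [c1, c2, c3] [] = (if weight [c1, c2, c3] = 1 then 1 else 0)"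
| "gmat (White z) [c1, c2] [] =
     (if \<not> c1 \<and> \<not> c2 then 1 else if c1 \<and> c2 then z else 0)"
| "gmat _ _ _ = 0"

text \<open>The equations of strict monoidal categories are
irrelevant for fullness, which only asks for existence of some term.\<close>
datatype diag = Gen gen | Id nat | Seq diag diag | Par diag diag

fun ddom :: "diag \<Rightarrow> nat" and dcod :: "diag \<Rightarrow> nat" where
  "ddom (Gen g) = gdom g" | "ddom (Id n) = n"
| "ddom (Seq d1 d2) = ddom d1" | "ddom (Par d1 d2) = ddom d1 + ddom d2"
| "dcod (Gen g) = gcod g" | "dcod (Id n) = n"
| "dcod (Seq d1 d2) = dcod d2" | "dcod (Par d1 d2) = dcod d1 + dcod d2"

text \<open>Well-formedness: Seq d1 d2 means d2 after d1, requiring cod d1 = dom d2.\<close>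
fun wf_diag :: "diag \<Rightarrow> bool" where
  "wf_diag (Gen g) = True" | "wf_diag (Id n) = True"
| "wf_diag (Seq d1 d2) = (wf_diag d1 \<and> wf_diag d2 \<and> dcod d1 = ddom d2)"
| "wf_diag (Par d1 d2) = (wf_diag d1 \<and> wf_diag d2)"

text \<open>The strict monoidal functor f: composition is matrix product, tensor is
the Kronecker product (first factor = leading bits).\<close>
fun interp :: "diag \<Rightarrow> lmap" where
  "interp (Gen g) out inp = gmat g out inp"
| "interp (Id n) out inp = (if out = inp then 1 else 0)"
| "interp (Seq d1 d2) out inp =
     (\<Sum>c\<in>bitstrings (dcod d1). interp d2 out c * interp d1 c inp)"
| "interp (Par d1 d2) out inp =
     interp d1 (take (dcod d1) out) (take (ddom d1) inp) *
     interp d2 (drop (dcod d1) out) (drop (ddom d1) inp)"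

end

theory Submission
  imports Defs
begin


lemma bs_mem[simp]: "xs \<in> bitstrings k \<longleftrightarrow> length xs = k"
  by (simp add: bitstrings_def)

lemma finite_bs[simp]: "finite (bitstrings k)"
  unfolding bitstrings_def using finite_lists_length_eq[of "UNIV::bool set" k] by simp

lemma bs_0[simp]: "bitstrings 0 = {[]}"
  by (auto simp: bitstrings_def)

lemma bs_Suc: "bitstrings (Suc k) = (\<lambda>xs. False # xs) ` bitstrings k \<union> (\<lambda>xs. True # xs) ` bitstrings k"
  by (auto simp: bitstrings_def length_Suc_conv image_iff)

lemma sum_bs_0[simp]: "sum f (bitstrings 0) = f []"
  by (simp add: bs_0)

lemma sum_bs_Suc: "sum f (bitstrings (Suc k)) =
   sum (\<lambda>xs. f (False # xs)) (bitstrings k) + sum (\<lambda>xs. f (True # xs)) (bitstrings k)"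
proof -
  have "sum f (bitstrings (Suc k)) = sum f ((\<lambda>xs. False # xs) ` bitstrings k) + sum f ((\<lambda>xs. True # xs) ` bitstrings k)"
    unfolding bs_Suc by (rule sum.union_disjoint) auto
  also have "\<dots> = sum (\<lambda>xs. f (False # xs)) (bitstrings k) + sum (\<lambda>xs. f (True # xs)) (bitstrings k)"
    by (simp add: sum.reindex inj_on_def)
  finally show ?thesis .
qed

lemma sum_single:
  assumes "finite A" "v \<in> A" "\<And>c. c \<in> A \<Longrightarrow> c \<noteq> v \<Longrightarrow> f c = 0"
  shows "sum f A = f v"
proof -
  have "sum f A = f v + sum f (A - {v})" using assms by (simp add: sum.remove)
  also have "sum f (A - {v}) = 0" using assms by (intro sum.neutral) auto
  finally show ?thesis by simp
qed

lemma sum_bs_add: "sum f (bitstrings (a + b)) = (\<Sum>u\<in>bitstrings a. \<Sum>v\<in>bitstrings b. f (u @ v))"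
proof -
  have e: "bitstrings (a + b) = (\<lambda>(u,v). u @ v) ` (bitstrings a \<times> bitstrings b)"
  proof (rule set_eqI, rule iffI)
    fix x assume "x \<in> bitstrings (a+b)"
    then show "x \<in> (\<lambda>(u,v). u @ v) ` (bitstrings a \<times> bitstrings b)"
      by (intro image_eqI[of _ _ "(take a x, drop a x)"]) auto
  qed auto
  have i: "inj_on (\<lambda>(u,v). u @ v) (bitstrings a \<times> bitstrings b)"
    by (auto simp: inj_on_def)
  have "sum f (bitstrings (a + b)) = (\<Sum>p\<in>bitstrings a \<times> bitstrings b. f ((\<lambda>(u,v). u @ v) p))"
    unfolding e by (rule sum.reindex[OF i, unfolded comp_def])
  also have "\<dots> = (\<Sum>u\<in>bitstrings a. \<Sum>v\<in>bitstrings b. f (u @ v))"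
    by (simp add: sum.cartesian_product[of "\<lambda>u v. f (u @ v)"] split_def)
  finally show ?thesis .
qed

definition realizes :: "diag \<Rightarrow> nat \<Rightarrow> nat \<Rightarrow> lmap \<Rightarrow> bool" where
  "realizes d n m M \<longleftrightarrow> wf_diag d \<and> ddom d = n \<and> dcod d = m \<and>
    (\<forall>out inp. length out = m \<longrightarrow> length inp = n \<longrightarrow> interp d out inp = M out inp)"

definition rz :: "nat \<Rightarrow> nat \<Rightarrow> lmap \<Rightarrow> bool" where
  "rz n m M \<longleftrightarrow> (\<exists>d. realizes d n m M)"

lemma rz_cong:
  assumes "rz n m A" "\<And>y x. length y = m \<Longrightarrow> length x = n \<Longrightarrow> A y x = B y x"
  shows "rz n m B"
  using assms unfolding rz_def realizes_def by metis

lemma rz_seq: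
  assumes "rz n k A" "rz k m B"
  shows "rz n m (\<lambda>y x. \<Sum>c\<in>bitstrings k. B y c * A c x)"
proof -
  obtain d1 where d1: "realizes d1 n k A" using assms(1) rz_def by blast
  obtain d2 where d2: "realizes d2 k m B" using assms(2) rz_def by blast
  have "realizes (Seq d1 d2) n m (\<lambda>y x. \<Sum>c\<in>bitstrings k. B y c * A c x)"
    using d1 d2 unfolding realizes_def by (auto intro!: sum.cong)
  then show ?thesis unfolding rz_def by blast
qed

lemma rz_par:
  assumes "rz n1 m1 A" "rz n2 m2 B" "n = n1 + n2" "m = m1 + m2"
  shows "rz n m (\<lambda>y x. A (take m1 y) (take n1 x) * B (drop m1 y) (drop n1 x))"
proof -
  obtain d1 where d1: "realizes d1 n1 m1 A" using assms(1) rz_def by blast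
  obtain d2 where d2: "realizes d2 n2 m2 B" using assms(2) rz_def by blast
  have "realizes (Par d1 d2) n m (\<lambda>y x. A (take m1 y) (take n1 x) * B (drop m1 y) (drop n1 x))"
    using d1 d2 assms(3,4) unfolding realizes_def by auto
  then show ?thesis unfolding rz_def by blast
qed

lemma rz_id: "rz n n (\<lambda>y x. if y = x then 1 else 0)"
  unfolding rz_def realizes_def by (intro exI[of _ "Id n"]) auto

lemma rz_gen: "rz (gdom g) (gcod g) (gmat g)"
  unfolding rz_def realizes_def by (intro exI[of _ "Gen g"]) auto

lemma len2: "length xs = 2 \<Longrightarrow> \<exists>a b. xs = [a, b]"
  by (auto simp: numeral_2_eq_2 length_Suc_conv)
lemma len3: "length xs = 3 \<Longrightarrow> \<exists>a b c. xs = [a, b, c]"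
  by (auto simp: numeral_3_eq_3 length_Suc_conv)
lemma len1: "length xs = 1 \<Longrightarrow> \<exists>a. xs = [a]"
  by (auto simp: length_Suc_conv)

definition mono_rz :: "nat \<Rightarrow> nat \<Rightarrow> (bool list \<Rightarrow> bool list) \<Rightarrow> (bool list \<Rightarrow> complex) \<Rightarrow> bool" where
  "mono_rz n m p f \<longleftrightarrow> rz n m (\<lambda>y x. if y = p x then f x else 0) \<and> (\<forall>x. length x = n \<longrightarrow> length (p x) = m)"

definition bin_rz :: "nat \<Rightarrow> nat \<Rightarrow> (bool list \<Rightarrow> bool list) \<Rightarrow> (bool list \<Rightarrow> complex)
   \<Rightarrow> (bool list \<Rightarrow> bool list) \<Rightarrow> (bool list \<Rightarrow> complex) \<Rightarrow> bool" where
  "bin_rz n m p0 f0 p1 f1 \<longleftrightarrow> rz n m (\<lambda>y x. (if y = p0 x then f0 x else 0) + (if y = p1 x then f1 x else 0))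
     \<and> (\<forall>x. length x = n \<longrightarrow> length (p0 x) = m \<and> length (p1 x) = m)"

lemma mono_cong:
  assumes "mono_rz n m p f" "\<And>x. length x = n \<Longrightarrow> p x = p' x" "\<And>x. length x = n \<Longrightarrow> f x = f' x"
  shows "mono_rz n m p' f'"
  using assms unfolding mono_rz_def by (auto elim!: rz_cong)

lemma bin_cong:
  assumes "bin_rz n m p0 f0 p1 f1" "\<And>x. length x = n \<Longrightarrow> p0 x = p0' x" "\<And>x. length x = n \<Longrightarrow> f0 x = f0' x"
    "\<And>x. length x = n \<Longrightarrow> p1 x = p1' x" "\<And>x. length x = n \<Longrightarrow> f1 x = f1' x"
  shows "bin_rz n m p0' f0' p1' f1'"
  using assms unfolding bin_rz_def by (auto elim!: rz_cong)

lemma rz_seq_mono: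
  assumes "mono_rz n k p f" "rz k m B"
  shows "rz n m (\<lambda>y x. B y (p x) * f x)"
proof -
  have r: "rz n m (\<lambda>y x. \<Sum>c\<in>bitstrings k. B y c * (if c = p x then f x else 0))"
    using rz_seq assms unfolding mono_rz_def by blast
  show ?thesis
  proof (rule rz_cong[OF r])
    fix y x :: "bool list" assume "length x = n"
    then have "p x \<in> bitstrings k" using assms(1) unfolding mono_rz_def by auto
    then show "(\<Sum>c\<in>bitstrings k. B y c * (if c = p x then f x else 0)) = B y (p x) * f x"
      by (subst sum_single[where v = "p x"]) auto
  qed
qed

lemma rz_seq_bin:
  assumes "bin_rz n k p0 f0 p1 f1" "rz k m B"
  shows "rz n m (\<lambda>y x. B y (p0 x) * f0 x + B y (p1 x) * f1 x)"
proof -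
  have r: "rz n m (\<lambda>y x. \<Sum>c\<in>bitstrings k. B y c * ((if c = p0 x then f0 x else 0) + (if c = p1 x then f1 x else 0)))"
    using rz_seq assms unfolding bin_rz_def by blast
  show ?thesis
  proof (rule rz_cong[OF r])
    fix y x :: "bool list" assume "length x = n"
    then have "p0 x \<in> bitstrings k" "p1 x \<in> bitstrings k" using assms(1) unfolding bin_rz_def by auto
    then show "(\<Sum>c\<in>bitstrings k. B y c * ((if c = p0 x then f0 x else 0) + (if c = p1 x then f1 x else 0)))
       = B y (p0 x) * f0 x + B y (p1 x) * f1 x"
      by (simp add: distrib_left sum.distrib, subst sum_single[where v = "p0 x"], simp_all,
          subst sum_single[where v = "p1 x"], simp_all)
  qed
qed

lemma mono_seq:
  assumes "mono_rz n k p f" "mono_rz k m q g"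
  shows "mono_rz n m (\<lambda>x. q (p x)) (\<lambda>x. g (p x) * f x)"
proof -
  have "rz n m (\<lambda>y x. (if y = q (p x) then g (p x) else 0) * f x)"
    using rz_seq_mono[OF assms(1)] assms(2) unfolding mono_rz_def by blast
  then have "rz n m (\<lambda>y x. if y = q (p x) then g (p x) * f x else 0)"
    by (rule rz_cong) auto
  then show ?thesis using assms unfolding mono_rz_def by auto
qed

lemma bin_mono:
  assumes "bin_rz n k p0 f0 p1 f1" "mono_rz k m q g"
  shows "bin_rz n m (\<lambda>x. q (p0 x)) (\<lambda>x. g (p0 x) * f0 x) (\<lambda>x. q (p1 x)) (\<lambda>x. g (p1 x) * f1 x)"
proof -
  have "rz n m (\<lambda>y x. (if y = q (p0 x) then g (p0 x) else 0) * f0 x + (if y = q (p1 x) then g (p1 x) else 0) * f1 x)"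
    using rz_seq_bin[OF assms(1)] assms(2) unfolding mono_rz_def by blast
  then have "rz n m (\<lambda>y x. (if y = q (p0 x) then g (p0 x) * f0 x else 0) + (if y = q (p1 x) then g (p1 x) * f1 x else 0))"
    by (rule rz_cong) auto
  then show ?thesis using assms unfolding mono_rz_def bin_rz_def by auto
qed

lemma app_eq_iff: "length a = m \<Longrightarrow> (y = a @ b) \<longleftrightarrow> (take m y = a \<and> drop m y = b)"
  by (metis append_eq_conv_conj)

lemma mono_par:
  assumes "mono_rz n1 m1 p f" "mono_rz n2 m2 q g" "n = n1 + n2" "m = m1 + m2"
  shows "mono_rz n m (\<lambda>x. p (take n1 x) @ q (drop n1 x)) (\<lambda>x. f (take n1 x) * g (drop n1 x))"
proof -
  have r: "rz n m (\<lambda>y x. (if take m1 y = p (take n1 x) then f (take n1 x) else 0) *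
            (if drop m1 y = q (drop n1 x) then g (drop n1 x) else 0))"
    using rz_par[OF _ _ assms(3,4)] assms(1,2) unfolding mono_rz_def by blast
  have "rz n m (\<lambda>y x. if y = p (take n1 x) @ q (drop n1 x) then f (take n1 x) * g (drop n1 x) else 0)"
  proof (rule rz_cong[OF r])
    fix y x :: "bool list" assume "length x = n"
    then have "length (p (take n1 x)) = m1" using assms unfolding mono_rz_def by auto
    then show "(if take m1 y = p (take n1 x) then f (take n1 x) else 0) *
            (if drop m1 y = q (drop n1 x) then g (drop n1 x) else 0) =
          (if y = p (take n1 x) @ q (drop n1 x) then f (take n1 x) * g (drop n1 x) else 0)"
      by (simp add: app_eq_iff)
  qed
  then show ?thesis using assms unfolding mono_rz_def by auto
qed

lemma bin_par_left:
  assumes "mono_rz n1 m1 p f" "bin_rz n2 m2 q0 g0 q1 g1" "n = n1 + n2" "m = m1 + m2"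
  shows "bin_rz n m (\<lambda>x. p (take n1 x) @ q0 (drop n1 x)) (\<lambda>x. f (take n1 x) * g0 (drop n1 x))
                    (\<lambda>x. p (take n1 x) @ q1 (drop n1 x)) (\<lambda>x. f (take n1 x) * g1 (drop n1 x))"
proof -
  have r: "rz n m (\<lambda>y x. (if take m1 y = p (take n1 x) then f (take n1 x) else 0) *
            ((if drop m1 y = q0 (drop n1 x) then g0 (drop n1 x) else 0) + (if drop m1 y = q1 (drop n1 x) then g1 (drop n1 x) else 0)))"
    using rz_par[OF _ _ assms(3,4)] assms(1,2) unfolding mono_rz_def bin_rz_def by blast
  have "rz n m (\<lambda>y x. (if y = p (take n1 x) @ q0 (drop n1 x) then f (take n1 x) * g0 (drop n1 x) else 0) +
     (if y = p (take n1 x) @ q1 (drop n1 x) then f (take n1 x) * g1 (drop n1 x) else 0))"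
  proof (rule rz_cong[OF r])
    fix y x :: "bool list" assume "length x = n"
    then have "length (p (take n1 x)) = m1" using assms unfolding mono_rz_def by auto
    then show "(if take m1 y = p (take n1 x) then f (take n1 x) else 0) *
            ((if drop m1 y = q0 (drop n1 x) then g0 (drop n1 x) else 0) + (if drop m1 y = q1 (drop n1 x) then g1 (drop n1 x) else 0)) =
       (if y = p (take n1 x) @ q0 (drop n1 x) then f (take n1 x) * g0 (drop n1 x) else 0) +
     (if y = p (take n1 x) @ q1 (drop n1 x) then f (take n1 x) * g1 (drop n1 x) else 0)"
      by (simp add: app_eq_iff distrib_left)
  qed
  then show ?thesis using assms unfolding mono_rz_def bin_rz_def by auto
qed

lemma bin_par_right:
  assumes "bin_rz n1 m1 p0 f0 p1 f1" "mono_rz n2 m2 q g" "n = n1 + n2" "m = m1 + m2"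
  shows "bin_rz n m (\<lambda>x. p0 (take n1 x) @ q (drop n1 x)) (\<lambda>x. f0 (take n1 x) * g (drop n1 x))
                    (\<lambda>x. p1 (take n1 x) @ q (drop n1 x)) (\<lambda>x. f1 (take n1 x) * g (drop n1 x))"
proof -
  have r: "rz n m (\<lambda>y x. ((if take m1 y = p0 (take n1 x) then f0 (take n1 x) else 0) + (if take m1 y = p1 (take n1 x) then f1 (take n1 x) else 0)) *
            (if drop m1 y = q (drop n1 x) then g (drop n1 x) else 0))"
    using rz_par[OF _ _ assms(3,4)] assms(1,2) unfolding mono_rz_def bin_rz_def by blast
  have "rz n m (\<lambda>y x. (if y = p0 (take n1 x) @ q (drop n1 x) then f0 (take n1 x) * g (drop n1 x) else 0) +
     (if y = p1 (take n1 x) @ q (drop n1 x) then f1 (take n1 x) * g (drop n1 x) else 0))"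
  proof (rule rz_cong[OF r])
    fix y x :: "bool list" assume "length x = n"
    then have "length (p0 (take n1 x)) = m1" "length (p1 (take n1 x)) = m1" using assms unfolding bin_rz_def by auto
    then show "((if take m1 y = p0 (take n1 x) then f0 (take n1 x) else 0) + (if take m1 y = p1 (take n1 x) then f1 (take n1 x) else 0)) *
            (if drop m1 y = q (drop n1 x) then g (drop n1 x) else 0) =
       (if y = p0 (take n1 x) @ q (drop n1 x) then f0 (take n1 x) * g (drop n1 x) else 0) +
     (if y = p1 (take n1 x) @ q (drop n1 x) then f1 (take n1 x) * g (drop n1 x) else 0)"
      by (simp add: app_eq_iff distrib_right)
  qed
  then show ?thesis using assms unfolding mono_rz_def bin_rz_def by auto
qed

lemma mono_id: "mono_rz n n (\<lambda>x. x) (\<lambda>_. 1)"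
  unfolding mono_rz_def using rz_id by auto

lemma mono_swap: "mono_rz 2 2 rev (\<lambda>_. 1)"
proof -
  have "rz 2 2 (gmat Swap)" using rz_gen[of Swap] by simp
  then have "rz 2 2 (\<lambda>y x. if y = rev x then 1 else 0)"
    by (rule rz_cong) (auto dest!: len2)
  then show ?thesis unfolding mono_rz_def by auto
qed

lemma mono_fswap: "mono_rz 2 2 rev (\<lambda>x. if x!0 \<and> x!1 then -1 else 1)"
proof -
  have "rz 2 2 (gmat FSwap)" using rz_gen[of FSwap] by simp
  then have "rz 2 2 (\<lambda>y x. if y = rev x then (if x!0 \<and> x!1 then -1 else 1) else 0)"
    by (rule rz_cong) (auto dest!: len2)
  then show ?thesis unfolding mono_rz_def by auto
qed

lemma mono_cap: "mono_rz 2 0 (\<lambda>_. []) (\<lambda>x. if x!0 = x!1 then 1 else 0)"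
proof -
  have "rz 2 0 (gmat DualDag)" using rz_gen[of DualDag] by simp
  then have "rz 2 0 (\<lambda>y x. if y = [] then (if x!0 = x!1 then 1 else 0) else 0)"
    by (rule rz_cong) (auto dest!: len2)
  then show ?thesis unfolding mono_rz_def by auto
qed

lemma bin_white: "bin_rz 0 2 (\<lambda>_. [False, False]) (\<lambda>_. 1) (\<lambda>_. [True, True]) (\<lambda>_. z)"
proof -
  have "rz 0 2 (gmat (White z))" using rz_gen[of "White z"] by simp
  then have "rz 0 2 (\<lambda>y x. (if y = [False, False] then 1 else 0) + (if y = [True, True] then z else 0))"
  proof (rule rz_cong)
    fix y x :: "bool list" assume "length y = 2" "length x = 0"
    then obtain a b where "y = [a, b]" "x = []" using len2 by blast
    then show "gmat (White z) y x = (if y = [False, False] then 1 else 0) + (if y = [True, True] then z else 0)"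
      by (cases a; cases b) auto
  qed
  then show ?thesis unfolding bin_rz_def by auto
qed

lemma rz_black2: "rz 0 2 (\<lambda>y x. if y = [True, False] \<or> y = [False, True] then 1 else 0)"
proof -
  have "rz 0 2 (gmat Black2)" using rz_gen[of Black2] by simp
  then show ?thesis
  proof (rule rz_cong)
    fix y x :: "bool list" assume "length y = 2" "length x = 0"
    then obtain a b where "y = [a, b]" "x = []" using len2 by blast
    then show "gmat Black2 y x = (if y = [True, False] \<or> y = [False, True] then 1 else 0)"
      by (cases a; cases b) (auto simp: weight_def)
  qed
qed

lemma rz_black3: "rz 0 3 (\<lambda>y x. if weight y = 1 then 1 else 0)"
proof -
  have "rz 0 3 (gmat Black3)" using rz_gen[of Black3] by simp
  then show ?thesis
  proof (rule rz_cong)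
    fix y x :: "bool list" assume "length y = 3" "length x = 0"
    then obtain a b c where "y = [a, b, c]" "x = []" using len3 by blast
    then show "gmat Black3 y x = (if weight y = 1 then 1 else 0)"
      by simp
  qed
qed

lemma rz_scalar: "rz 0 0 (\<lambda>y x. s)"
proof -
  show ?thesis
    using rz_seq_bin[OF bin_white[of "s - 1"] mono_cap[unfolded mono_rz_def, THEN conjunct1]]
    by (rule rz_cong) simp
qed


lemma mono_ket1: "mono_rz 0 1 (\<lambda>_. [True]) (\<lambda>_. 1)"
proof -
  have m: "mono_rz 3 1 (\<lambda>x. take 1 x @ []) (\<lambda>x. 1 * (if drop 1 x ! 0 = drop 1 x ! 1 then 1 else 0))"
    by (rule mono_par[OF mono_id mono_cap]) auto
  have "rz 0 1 (\<lambda>y x. \<Sum>c\<in>bitstrings 3. (if y = take 1 c @ [] then 1 * (if drop 1 c ! 0 = drop 1 c ! 1 then 1 else 0) else 0)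
      * (if weight c = 1 then 1 else 0))"
    by (rule rz_seq[OF rz_black3 m[unfolded mono_rz_def, THEN conjunct1]])
  then have "rz 0 1 (\<lambda>y x. if y = [True] then 1 else 0)"
  proof (rule rz_cong, goal_cases)
    case (1 y x)
    then obtain a where "y = [a]" using len1 by blast
    then show ?case
      by (cases a) (simp_all add: eval_nat_numeral sum_bs_Suc weight_def)
  qed
  then show ?thesis unfolding mono_rz_def by auto
qed



lemma mono_X: "mono_rz 1 1 (\<lambda>x. [\<not> hd x]) (\<lambda>_. 1)"
proof -
  have m: "mono_rz 3 1 (\<lambda>x. [] @ drop 2 x) (\<lambda>x. (if take 2 x ! 0 = take 2 x ! 1 then 1 else 0) * 1)"
    by (rule mono_par[OF mono_cap mono_id]) auto
  have a: "rz 1 3 (\<lambda>y x. (if take 1 y = x then 1 else 0) * (if drop 1 y = [True, False] \<or> drop 1 y = [False, True] then 1 else 0))"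
    using rz_par[OF rz_id[of 1] rz_black2, of 1 3] by (rule rz_cong) simp_all
  have "rz 1 1 (\<lambda>y x. \<Sum>c\<in>bitstrings 3. (if y = [] @ drop 2 c then (if take 2 c ! 0 = take 2 c ! 1 then 1 else 0) * 1 else 0) *
      ((if take 1 c = x then 1 else 0) * (if drop 1 c = [True, False] \<or> drop 1 c = [False, True] then 1 else 0)))"
    by (rule rz_seq[OF a m[unfolded mono_rz_def, THEN conjunct1]])
  then have "rz 1 1 (\<lambda>y x. if y = [\<not> hd x] then 1 else 0)"
  proof (rule rz_cong, goal_cases)
    case (1 y x)
    then obtain a b where "y = [a]" "x = [b]" using len1 by blast
    then show ?case
      by (cases a; cases b) (simp_all add: eval_nat_numeral sum_bs_Suc)
  qed
  then show ?thesis unfolding mono_rz_def by auto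
qed




lemma mono_ket0: "mono_rz 0 1 (\<lambda>_. [False]) (\<lambda>_. 1)"
  using mono_seq[OF mono_ket1 mono_X] by (rule mono_cong) auto



lemma mono_bra1: "mono_rz 1 0 (\<lambda>_. []) (\<lambda>x. if hd x then 1 else 0)"
proof -
  have "mono_rz 1 2 (\<lambda>x. take 1 x @ [True]) (\<lambda>x. 1 * 1)"
    using mono_par[OF mono_id[of 1] mono_ket1, of 1 2] by simp
  from mono_seq[OF this mono_cap] show ?thesis
    by (rule mono_cong) (auto simp: length_Suc_conv)
qed




lemma mono_kets0: "mono_rz 0 k (\<lambda>_. replicate k False) (\<lambda>_. 1)"
proof (induction k)
  case 0
  then show ?case using mono_id[of 0] by (rule mono_cong) auto
next
  case (Suc k)
  from mono_par[OF mono_ket0 Suc, of 0 "Suc k"] show ?case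
    by (rule mono_cong) auto
qed



lemma mono_cz: "mono_rz 2 2 (\<lambda>x. x) (\<lambda>x. if x!0 \<and> x!1 then -1 else 1)"
  using mono_seq[OF mono_fswap mono_swap] by (rule mono_cong) (auto dest!: len2)




lemma rz_attach:
  assumes "rz 0 k S" "rz (n + k) m B"
  shows "rz n m (\<lambda>y x. \<Sum>v\<in>bitstrings k. B y (x @ v) * S v [])"
proof -
  have a: "rz n (n + k) (\<lambda>y x. (if take n y = take n x then 1 else 0) * S (drop n y) (drop n x))"
    by (rule rz_par[OF rz_id assms(1)]) auto
  have r: "rz n m (\<lambda>y x. \<Sum>c\<in>bitstrings (n + k). B y c * ((if take n c = take n x then 1 else 0) * S (drop n c) (drop n x)))"
    by (rule rz_seq[OF a assms(2)])
  show ?thesis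
  proof (rule rz_cong[OF r])
    fix y x :: "bool list" assume x: "length x = n"
    have "(\<Sum>c\<in>bitstrings (n + k). B y c * ((if take n c = take n x then 1 else 0) * S (drop n c) (drop n x)))
      = (\<Sum>u\<in>bitstrings n. \<Sum>v\<in>bitstrings k. B y (u @ v) * ((if u = x then 1 else 0) * S v []))"
      using x by (simp add: sum_bs_add)
    also have "\<dots> = (\<Sum>v\<in>bitstrings k. B y (x @ v) * ((if x = x then 1 else 0) * S v []))"
      using x by (subst sum_single[where v = x]) auto
    finally show "(\<Sum>c\<in>bitstrings (n + k). B y c * ((if take n c = take n x then 1 else 0) * S (drop n c) (drop n x)))
      = (\<Sum>v\<in>bitstrings k. B y (x @ v) * S v [])" by simp
  qed
qed

lemma len5: "length xs = 5 \<Longrightarrow> \<exists>a b c d e. xs = [a,b,c,d,e]"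
  by (simp add: numeral_eq_Suc length_Suc_conv) blast

lemma mono_W: "mono_rz 2 1 (\<lambda>x. [x!0 \<noteq> x!1]) (\<lambda>x. if x!0 \<and> x!1 then 0 else 1)"
proof -
  have m1: "mono_rz 5 3 (\<lambda>x. take 1 x @ ([] @ drop 2 (drop 1 x)))
     (\<lambda>x. 1 * ((if take 2 (drop 1 x) ! 0 = take 2 (drop 1 x) ! 1 then 1 else 0) * 1))"
    by (rule mono_par[OF mono_id[of 1] mono_par[OF mono_cap mono_id[of 2], of 4 2]]) auto
  have m2: "mono_rz 3 1 (\<lambda>x. [] @ drop 2 x) (\<lambda>x. (if take 2 x ! 0 = take 2 x ! 1 then 1 else 0) * 1)"
    by (rule mono_par[OF mono_cap mono_id[of 1]]) auto
  note mm = mono_seq[OF mono_seq[OF m1 m2] mono_X]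
  have m: "mono_rz 5 1 (\<lambda>x. [\<not> x!4]) (\<lambda>x. (if x!1 = x!2 then 1 else 0) * (if x!0 = x!3 then 1 else 0))"
    apply (rule mono_cong[OF mm])
    subgoal for x apply (drule len5) apply (elim exE) by simp
    subgoal for x apply (drule len5) apply (elim exE) by simp
    done
  have mp: "rz (2 + 3) 1 (\<lambda>y x. if y = [\<not> x!4] then (if x!1 = x!2 then 1 else 0) * (if x!0 = x!3 then 1 else 0) else 0)"
    using m[unfolded mono_rz_def, THEN conjunct1] by simp
  note r = rz_attach[OF rz_black3 mp]
  have "rz 2 1 (\<lambda>y x. if y = [x!0 \<noteq> x!1] then (if x!0 \<and> x!1 then 0 else 1) else 0)"
  proof (rule rz_cong[OF r], goal_cases)
    case (1 y x)
    obtain a b c where "y = [c]" "x = [a, b]" using len1[OF 1(1)] len2[OF 1(2)] by blast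
    then show ?case
      by (cases a; cases b; cases c) (simp_all add: numeral_3_eq_3 sum_bs_Suc weight_def)
  qed
  then show ?thesis unfolding mono_rz_def by auto
qed




lemma len4: "length xs = 4 \<Longrightarrow> \<exists>a b c d. xs = [a,b,c,d]"
  by (simp add: numeral_eq_Suc length_Suc_conv) blast

lemma mono_Pi: "mono_rz 2 2 (\<lambda>x. x) (\<lambda>x. if x!0 = x!1 then 1 else 0)"
proof -
  note inner = bin_par_right[OF bin_white[of 1] mono_id[of 1], of 1 3]
  note bp0 = bin_par_left[OF mono_id[of 1] inner, of 2 4]
  have bp: "bin_rz 2 4 (\<lambda>x. [x!0, False, False, x!1]) (\<lambda>x. 1) (\<lambda>x. [x!0, True, True, x!1]) (\<lambda>x. 1)"
    by (rule bin_cong[OF bp0]) (auto dest!: len2)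
  note g1 = mono_par[OF mono_cz mono_cz, of 4 4]
  note g2 = mono_par[OF mono_id[of 1] mono_par[OF mono_cap mono_id[of 1], of 3 1], of 4 2]
  note g0 = mono_seq[OF g1 g2]
  have g: "mono_rz 4 2 (\<lambda>x. [x!0, x!3]) (\<lambda>x. (if x!0 \<and> x!1 then -1 else 1) * (if x!2 \<and> x!3 then -1 else 1) * (if x!1 = x!2 then 1 else 0))"
    by (rule mono_cong[OF g0]) (auto dest!: len4)
  note b = bin_mono[OF bp g]
  note r0 = rz_par[OF rz_scalar[of "1/2"] b[unfolded bin_rz_def, THEN conjunct1], of 2 2]
  have "rz 2 2 (\<lambda>y x. if y = x then (if x!0 = x!1 then 1 else 0) else 0)"
  proof (rule rz_cong[OF r0], goal_cases)
    case 1 show ?case by simp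
  next
    case 2 show ?case by simp
  next
    case (3 y x)
    obtain a b where "x = [a, b]" using len2[OF 3(2)] by blast
    then show ?case by (cases a; cases b) auto
  qed
  then show ?thesis unfolding mono_rz_def by auto
qed

lemma mono_copy3: "mono_rz 1 3 (\<lambda>x. [hd x, hd x, hd x]) (\<lambda>x. 1)"
proof -
  note bp0 = bin_par_left[OF mono_id[of 1] bin_white[of 1], of 1 3]
  have bp: "bin_rz 1 3 (\<lambda>x. [hd x, False, False]) (\<lambda>x. 1) (\<lambda>x. [hd x, True, True]) (\<lambda>x. 1)"
    apply (rule bin_cong[OF bp0])
    by (auto simp: length_Suc_conv)
  note g0 = mono_par[OF mono_Pi mono_id[of 1], of 3 3]
  note b = bin_mono[OF bp g0]
  have "rz 1 3 (\<lambda>y x. if y = [hd x, hd x, hd x] then 1 else 0)"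
    by (rule rz_cong[OF b[unfolded bin_rz_def, THEN conjunct1]]; simp)
  then show ?thesis unfolding mono_rz_def by auto
qed




lemma len_Suc2: "length x = Suc (Suc k) \<Longrightarrow> \<exists>w a b. x = w @ [a, b] \<and> length w = k"
proof -
  assume h: "length x = Suc (Suc k)"
  then obtain x1 b where "x = x1 @ [b]" by (metis length_0_conv nat.distinct(1) rev_exhaust)
  moreover then obtain w a where "x1 = w @ [a]" using h by (metis Suc_neq_Zero length_0_conv length_append_singleton nat.inject rev_exhaust)
  ultimately show ?thesis using h by auto
qed

lemma mono_shift: "mono_rz (Suc k) (Suc k) (\<lambda>x. last x # butlast x) (\<lambda>_. 1)"
proof (induction k)
  case 0
  have "mono_rz 1 1 (\<lambda>x. last x # butlast x) (\<lambda>_. 1)"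
    by (rule mono_cong[OF mono_id[of 1]]) (auto simp: length_Suc_conv)
  then show ?case by simp
next
  case (Suc k)
  note g1 = mono_par[OF mono_id[of k] mono_swap, of "Suc (Suc k)" "Suc (Suc k)"]
  note g2 = mono_par[OF Suc.IH mono_id[of 1], of "Suc (Suc k)" "Suc (Suc k)"]
  note g = mono_seq[OF g1 g2]
  show ?case
    apply (rule mono_cong[OF g]; (simp; fail)?)
    subgoal for x apply (drule len_Suc2) apply (elim exE conjE) by (simp add: butlast_append)
    done
qed





lemma len_split: "length x = Suc k + Suc k \<Longrightarrow> \<exists>a u b v. x = a # u @ b # v \<and> length u = k \<and> length v = k"
proof -
  assume h: "length x = Suc k + Suc k"
  then obtain a r where r: "x = a # r" "length r = k + Suc k" by (cases x) auto
  then have "r = take k r @ drop k r" "length (drop k r) = Suc k" by auto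
  then obtain b v where "drop k r = b # v" by (cases "drop k r") auto
  moreover have "length (take k r) = k" using r by simp
  moreover have "length v = k" using r \<open>drop k r = b # v\<close> by (metis length_Cons length_drop add_diff_cancel_left' nat.inject)
  ultimately have "x = a # take k r @ b # v \<and> length (take k r) = k \<and> length v = k"
    using r by (metis append_take_drop_id)
  then show ?thesis by blast
qed

fun mp :: "bool list \<Rightarrow> bool list \<Rightarrow> bool list" where
  "mp (a # as) (b # bs) = (a \<noteq> b) # mp as bs"
| "mp _ _ = []"

fun mf :: "bool list \<Rightarrow> bool list \<Rightarrow> complex" where
  "mf (a # as) (b # bs) = (if a \<and> b then 0 else 1) * mf as bs"
| "mf _ _ = 1"

lemma mono_merge: "mono_rz (K + K) K (\<lambda>x. mp (take K x) (drop K x)) (\<lambda>x. mf (take K x) (drop K x))"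
proof (induction K)
  case 0
  have "mono_rz 0 0 (\<lambda>x. mp (take 0 x) (drop 0 x)) (\<lambda>x. mf (take 0 x) (drop 0 x))"
    by (rule mono_cong[OF mono_id[of 0]]) auto
  then show ?case by simp
next
  case (Suc k)
  note P = mono_par[OF mono_id[of 1] mono_par[OF mono_shift[of k] mono_id[of k], of "Suc k + k" "Suc k + k"],
     of "Suc k + Suc k" "Suc k + Suc k"]
  note B = mono_par[OF mono_W Suc.IH, of "Suc k + Suc k" "Suc k"]
  note g = mono_seq[OF P B]
  show ?case
    apply (rule mono_cong[OF g]; (simp; fail)?)
    subgoal for x apply (drule len_split) apply (elim exE conjE) by (simp add: butlast_append)
    subgoal for x apply (drule len_split) apply (elim exE conjE) by (simp add: butlast_append)
    done
qed




lemma len_mid: "length x = Suc n + Suc n \<Longrightarrow> \<exists>a w b. x = a # w @ [b] \<and> length w = n + n"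
proof -
  assume h: "length x = Suc n + Suc n"
  then obtain a r where r: "x = a # r" "length r = Suc (n + n)" by (cases x) auto
  then obtain w b where "r = w @ [b]" by (metis length_0_conv nat.distinct(1) rev_exhaust)
  then show ?thesis using r by auto
qed

lemma mono_caps: "mono_rz (n + n) 0 (\<lambda>_. []) (\<lambda>x. if take n x = rev (drop n x) then 1 else 0)"
proof (induction n)
  case 0
  have "mono_rz 0 0 (\<lambda>_. []) (\<lambda>x. if take 0 x = rev (drop 0 x) then 1 else 0)"
    by (rule mono_cong[OF mono_id[of 0]]) auto
  then show ?case by simp
next
  case (Suc n)
  note P = mono_par[OF mono_id[of 1] mono_par[OF Suc.IH mono_id[of 1], of "n + n + 1" 1], of "Suc n + Suc n" 2]
  note g = mono_seq[OF P mono_cap]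
  show ?case
    apply (rule mono_cong[OF g]; (simp; fail)?)
    subgoal for x apply (drule len_mid) apply (elim exE conjE) by (auto simp: take_append drop_append)
    done
qed

lemma rz_seq_single:
  assumes "rz n k A" "rz k m B"
    and "\<And>y x c. length y = m \<Longrightarrow> length x = n \<Longrightarrow> length c = k \<Longrightarrow> c \<noteq> h y x \<Longrightarrow> B y c * A c x = 0"
    and "\<And>y x. length y = m \<Longrightarrow> length x = n \<Longrightarrow> length (h y x) = k"
  shows "rz n m (\<lambda>y x. B y (h y x) * A (h y x) x)"
proof (rule rz_cong[OF rz_seq[OF assms(1,2)]])
  fix y x :: "bool list" assume "length y = m" "length x = n"
  then show "(\<Sum>c\<in>bitstrings k. B y c * A c x) = B y (h y x) * A (h y x) x"
    using assms(3,4) by (intro sum_single) auto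
qed

lemma rz_bend:
  assumes "rz 0 (m + n) S"
  shows "rz n m (\<lambda>y x. S (y @ rev x) [])"
proof -
  note A = rz_par[OF assms rz_id[of n], of n "m + n + n"]
  note B = mono_par[OF mono_id[of m] mono_caps[of n], of "m + n + n" m]
  note r = rz_seq_single[OF A B[unfolded mono_rz_def, THEN conjunct1], where h = "\<lambda>y x. y @ rev x @ x"]
  have r2: "rz n m (\<lambda>y x. (if y = take m (y @ rev x @ x) @ []
               then 1 * (if take n (drop m (y @ rev x @ x)) = rev (drop n (drop m (y @ rev x @ x))) then 1 else 0) else 0) *
              (S (take (m + n) (y @ rev x @ x)) (take 0 x) *
               (if drop (m + n) (y @ rev x @ x) = drop 0 x then 1 else 0)))"
  proof (rule r)
    fix y x c :: "bool list" assume h: "length y = m" "length x = n" "length c = m + n + n" "c \<noteq> y @ rev x @ x"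
    show "(if y = take m c @ [] then 1 * (if take n (drop m c) = rev (drop n (drop m c)) then 1 else 0) else 0) *
         (S (take (m + n) c) (take 0 x) * (if drop (m + n) c = drop 0 x then 1 else 0)) = 0"
    proof (rule ccontr)
      assume "\<not> ?thesis"
      then have e: "y = take m c" "take n (drop m c) = rev (drop n (drop m c))" "drop (m + n) c = x"
        by (auto split: if_splits)
      have d: "drop n (drop m c) = x" using e(3) by (simp add: add.commute)
      have t: "take n (drop m c) = rev x" using e(2) d by simp
      have "c = take m c @ take n (drop m c) @ drop n (drop m c)" by (metis append_take_drop_id)
      then have "c = y @ rev x @ x" using e(1) d t by simp
      then show False using h by simp
    qed
  qed auto
  show ?thesis
    by (rule rz_cong[OF r2]) auto
qed

lemma rz_proj:
  assumes "rz 0 (Suc k) S"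
  shows "rz 0 k (\<lambda>y x. S (y @ [True]) [])"
proof -
  note B = mono_par[OF mono_id[of k] mono_bra1, of "Suc k" k]
  note r = rz_seq_single[OF assms B[unfolded mono_rz_def, THEN conjunct1], where h = "\<lambda>y x. y @ [True]"]
  have r2: "rz 0 k (\<lambda>y x. (if y = take k (y @ [True]) @ [] then 1 * (if hd (drop k (y @ [True])) then 1 else 0) else 0) *
       S (y @ [True]) x)"
  proof (rule r)
    fix y x c :: "bool list" assume h: "length y = k" "length x = 0" "length c = Suc k" "c \<noteq> y @ [True]"
    show "(if y = take k c @ [] then 1 * (if hd (drop k c) then 1 else 0) else 0) * S c x = 0"
    proof (rule ccontr)
      assume "\<not> ?thesis"
      then have e: "y = take k c" "hd (drop k c)" by (auto split: if_splits)
      have "length (drop k c) = 1" using h(3) by simp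
      then obtain z where "drop k c = [z]" using len1 by blast
      then have "drop k c = [hd (drop k c)]" by simp
      then have "c = take k c @ [True]" using e by (metis append_take_drop_id)
      then show False using h e by simp
    qed
  qed auto
  show ?thesis by (rule rz_cong[OF r2]) auto
qed




lemma weight_Cons[simp]: "weight (b # x) = (if b then Suc (weight x) else weight x)"
  by (simp add: weight_def)
lemma weight_Nil[simp]: "weight [] = 0"
  by (simp add: weight_def)
lemma weight_append[simp]: "weight (x @ y) = weight x + weight y"
  by (simp add: weight_def)
lemma weight_rev[simp]: "weight (rev x) = weight x"
  by (simp add: weight_def rev_filter[symmetric])

lemma rep_snoc: "replicate (Suc k) b = replicate k b @ [b]"
  by (simp add: replicate_append_same)

lemma KL:
  "(even (weight x) \<longrightarrow> bin_rz 0 (length x + 2) (\<lambda>_. replicate (length x + 2) False) (\<lambda>_. 1) (\<lambda>_. x @ [True, True]) (\<lambda>_. a))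
 \<and> (odd (weight x) \<longrightarrow> bin_rz 0 (length x + 1) (\<lambda>_. replicate (length x + 1) False) (\<lambda>_. 1) (\<lambda>_. x @ [True]) (\<lambda>_. a))"
proof (induction x)
  case Nil
  have "bin_rz 0 2 (\<lambda>_. [False, False]) (\<lambda>_. 1) (\<lambda>_. [True, True]) (\<lambda>_. a)" by (rule bin_white)
  then show ?case by (simp add: numeral_2_eq_2)
next
  case (Cons b x)
  show ?case
  proof (cases b)
    case False
    have e: "even (weight x) \<Longrightarrow> bin_rz 0 (length x + 3) (\<lambda>_. replicate (length x + 3) False) (\<lambda>_. 1) (\<lambda>_. False # x @ [True, True]) (\<lambda>_. a)"
    proof -
      assume "even (weight x)"
      then have K: "bin_rz 0 (length x + 2) (\<lambda>_. replicate (length x + 2) False) (\<lambda>_. 1) (\<lambda>_. x @ [True, True]) (\<lambda>_. a)"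
        using Cons.IH by blast
      note P = bin_par_left[OF mono_ket0 K, of 0 "length x + 3"]
      show ?thesis by (rule bin_cong[OF P]) (auto simp: numeral_3_eq_3)
    qed
    have o: "odd (weight x) \<Longrightarrow> bin_rz 0 (length x + 2) (\<lambda>_. replicate (length x + 2) False) (\<lambda>_. 1) (\<lambda>_. False # x @ [True]) (\<lambda>_. a)"
    proof -
      assume "odd (weight x)"
      then have L: "bin_rz 0 (length x + 1) (\<lambda>_. replicate (length x + 1) False) (\<lambda>_. 1) (\<lambda>_. x @ [True]) (\<lambda>_. a)"
        using Cons.IH by blast
      note P = bin_par_left[OF mono_ket0 L, of 0 "length x + 2"]
      show ?thesis by (rule bin_cong[OF P]) (auto simp: numeral_2_eq_2)
    qed
    have p: "even (weight (b # x)) = even (weight x)" using False by simp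
    show ?thesis unfolding p using e o False by (auto simp: numeral_eq_Suc)
  next
    case True
    have e: "odd (weight x) \<Longrightarrow> bin_rz 0 (length x + 3) (\<lambda>_. replicate (length x + 3) False) (\<lambda>_. 1) (\<lambda>_. True # x @ [True, True]) (\<lambda>_. a)"
    proof -
      assume "odd (weight x)"
      then have L: "bin_rz 0 (length x + 1) (\<lambda>_. replicate (length x + 1) False) (\<lambda>_. 1) (\<lambda>_. x @ [True]) (\<lambda>_. a)"
        using Cons.IH by blast
      note M1 = mono_par[OF mono_id[of "length x"] mono_copy3, of "length x + 1" "length x + 3"]
      note M2 = mono_par[OF mono_shift[of "length x"] mono_id[of 2], of "length x + 3" "length x + 3"]
      note M = mono_seq[OF M1 M2]
      note B = bin_mono[OF L M]
      show ?thesis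
        apply (rule bin_cong[OF B])
        by (auto simp: numeral_3_eq_3 rep_snoc butlast_append replicate_append_same[symmetric])
    qed
    have o: "even (weight x) \<Longrightarrow> bin_rz 0 (length x + 2) (\<lambda>_. replicate (length x + 2) False) (\<lambda>_. 1) (\<lambda>_. True # x @ [True]) (\<lambda>_. a)"
    proof -
      assume "even (weight x)"
      then have K: "bin_rz 0 (length x + 2) (\<lambda>_. replicate (length x + 2) False) (\<lambda>_. 1) (\<lambda>_. x @ [True, True]) (\<lambda>_. a)"
        using Cons.IH by blast
      note M = mono_par[OF mono_shift[of "length x"] mono_id[of 1], of "length x + 2" "length x + 2"]
      note B = bin_mono[OF K M]
      show ?thesis
        apply (rule bin_cong[OF B])
        by (auto simp: numeral_2_eq_2 rep_snoc butlast_append replicate_append_same[symmetric])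
    qed
    have p: "even (weight (b # x)) = odd (weight x)" using True by simp
    show ?thesis unfolding p using e o True by (auto simp: numeral_eq_Suc)
  qed
qed




definition Dst :: "nat \<Rightarrow> (bool list \<Rightarrow> complex) \<Rightarrow> bool list \<Rightarrow> complex" where
  "Dst k \<psi> y = (if y = replicate (Suc k) False then 1 else 0) + (if last y then \<psi> (butlast y) else 0)"

lemma mp_r0: "mp u (replicate (length u) False) = u" by (induction u) auto
lemma mf_r0: "mf u (replicate (length u) False) = 1" by (induction u) auto
lemma mp_l0: "mp (replicate (length v) False) v = v" by (induction v) auto
lemma mf_l0: "mf (replicate (length v) False) v = 1" by (induction v) auto

lemma mf_last: "length u = length v \<Longrightarrow> u \<noteq> [] \<Longrightarrow> last u \<Longrightarrow> last v \<Longrightarrow> mf u v = 0"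
proof (induction u arbitrary: v)
  case Nil then show ?case by simp
next
  case (Cons a u)
  then obtain b v' where v: "v = b # v'" by (cases v) auto
  show ?case
  proof (cases "u = []")
    case True
    then show ?thesis using Cons.prems v by auto
  next
    case False
    then have "v' \<noteq> []" using Cons.prems v by auto
    then have "mf u v' = 0" using Cons.IH[of v'] Cons.prems v False by auto
    then show ?thesis using v by simp
  qed
qed

lemma merge_sum:
  assumes y: "length y = Suc k"
  shows "(\<Sum>u\<in>bitstrings (Suc k). \<Sum>v\<in>bitstrings (Suc k). (if y = mp u v then mf u v else 0) * (Dst k \<alpha> u * Dst k \<beta> v))
    = Dst k (\<lambda>w. \<alpha> w + \<beta> w) y"
proof -
  define K where "K = Suc k"
  define z where "z = replicate K False"
  define G where "G u v = (if y = mp u v then mf u v else 0)" for u v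
  define d where "d u = (if u = z then 1 else 0 :: complex)" for u
  define a where "a u = (if last u then \<alpha> (butlast u) else 0)" for u
  define b where "b u = (if last u then \<beta> (butlast u) else 0)" for u
  have Dd: "Dst k \<alpha> u = d u + a u" "Dst k \<beta> u = d u + b u" for u
    unfolding Dst_def d_def a_def b_def z_def K_def by auto
  have z: "z \<in> bitstrings K" unfolding z_def by simp
  have zl: "length z = K" unfolding z_def by simp
  have exp: "G u v * (Dst k \<alpha> u * Dst k \<beta> v) = G u v * d u * d v + G u v * a u * d v + G u v * d u * b v + G u v * a u * b v" for u v
    unfolding Dd by (simp add: algebra_simps)
  have S1: "(\<Sum>u\<in>bitstrings K. \<Sum>v\<in>bitstrings K. G u v * d u * d v) = d y"
  proof -
    have "(\<Sum>u\<in>bitstrings K. \<Sum>v\<in>bitstrings K. G u v * d u * d v) = (\<Sum>u\<in>bitstrings K. G u z * d u * d z)"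
      by (intro sum.cong refl sum_single) (auto simp: z zl d_def)
    also have "\<dots> = G z z * d z * d z" by (intro sum_single) (auto simp: z zl d_def)
    also have "\<dots> = d y" unfolding G_def d_def z_def K_def using mp_r0[of "replicate (Suc k) False"] mf_r0[of "replicate (Suc k) False"]
      by auto
    finally show ?thesis .
  qed
  have S2: "(\<Sum>u\<in>bitstrings K. \<Sum>v\<in>bitstrings K. G u v * a u * d v) = a y"
  proof -
    have "(\<Sum>u\<in>bitstrings K. \<Sum>v\<in>bitstrings K. G u v * a u * d v) = (\<Sum>u\<in>bitstrings K. G u z * a u * d z)"
      by (intro sum.cong refl sum_single) (auto simp: z zl d_def)
    also have "\<dots> = (\<Sum>u\<in>bitstrings K. (if u = y then a u else 0))"
      unfolding G_def d_def z_def by (intro sum.cong refl) (auto simp: mp_r0[of _, simplified] mf_r0 dest: sym)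
    also have "\<dots> = a y" using y K_def by (simp add: sum.delta')
    finally show ?thesis .
  qed
  have S3: "(\<Sum>u\<in>bitstrings K. \<Sum>v\<in>bitstrings K. G u v * d u * b v) = b y"
  proof -
    have "(\<Sum>u\<in>bitstrings K. \<Sum>v\<in>bitstrings K. G u v * d u * b v) = (\<Sum>v\<in>bitstrings K. \<Sum>u\<in>bitstrings K. G u v * d u * b v)"
      by (rule sum.swap)
    also have "\<dots> = (\<Sum>v\<in>bitstrings K. G z v * d z * b v)"
      by (intro sum.cong refl sum_single) (auto simp: z zl d_def)
    also have "\<dots> = (\<Sum>v\<in>bitstrings K. (if v = y then b v else 0))"
      unfolding G_def d_def z_def by (intro sum.cong refl) (auto simp: mp_l0 mf_l0 dest: sym)
    also have "\<dots> = b y" using y K_def by (simp add: sum.delta')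
    finally show ?thesis .
  qed
  have S4: "(\<Sum>u\<in>bitstrings K. \<Sum>v\<in>bitstrings K. G u v * a u * b v) = 0"
  proof (intro sum.neutral ballI)
    fix u v assume "u \<in> bitstrings K" "v \<in> bitstrings K"
    then have l: "length u = K" "length v = K" by auto
    show "G u v * a u * b v = 0"
    proof (cases "last u \<and> last v")
      case True
      then have "mf u v = 0" using l K_def by (intro mf_last) auto
      then show ?thesis unfolding G_def by simp
    next
      case False
      then show ?thesis unfolding a_def b_def by auto
    qed
  qed
  have "(\<Sum>u\<in>bitstrings K. \<Sum>v\<in>bitstrings K. G u v * (Dst k \<alpha> u * Dst k \<beta> v)) =
     (\<Sum>u\<in>bitstrings K. \<Sum>v\<in>bitstrings K. G u v * d u * d v) + (\<Sum>u\<in>bitstrings K. \<Sum>v\<in>bitstrings K. G u v * a u * d v)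
     + (\<Sum>u\<in>bitstrings K. \<Sum>v\<in>bitstrings K. G u v * d u * b v) + (\<Sum>u\<in>bitstrings K. \<Sum>v\<in>bitstrings K. G u v * a u * b v)"
    unfolding exp by (simp add: sum.distrib)
  also have "\<dots> = d y + a y + b y" using S1 S2 S3 S4 by simp
  also have "\<dots> = Dst k (\<lambda>w. \<alpha> w + \<beta> w) y"
    unfolding Dst_def d_def a_def b_def z_def K_def by auto
  finally show ?thesis unfolding G_def K_def .
qed






lemma D_add:
  assumes "rz 0 (Suc k) (\<lambda>y x. Dst k \<alpha> y)" "rz 0 (Suc k) (\<lambda>y x. Dst k \<beta> y)"
  shows "rz 0 (Suc k) (\<lambda>y x. Dst k (\<lambda>w. \<alpha> w + \<beta> w) y)"
proof -
  note A = rz_par[OF assms, of 0 "Suc k + Suc k"]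
  note B = mono_merge[of "Suc k", unfolded mono_rz_def, THEN conjunct1]
  note r = rz_seq[OF A B]
  show ?thesis
    apply (rule rz_cong[OF r]; (simp; fail)?)
    subgoal for y x
    proof -
      assume l: "length y = Suc k"
      have "(\<Sum>c\<in>bitstrings (Suc k + Suc k). (if y = mp (take (Suc k) c) (drop (Suc k) c) then mf (take (Suc k) c) (drop (Suc k) c) else 0) *
         (Dst k \<alpha> (take (Suc k) c) * Dst k \<beta> (drop (Suc k) c)))
        = (\<Sum>u\<in>bitstrings (Suc k). \<Sum>v\<in>bitstrings (Suc k). (if y = mp u v then mf u v else 0) * (Dst k \<alpha> u * Dst k \<beta> v))"
        by (subst sum_bs_add) (intro sum.cong refl, simp)
      also have "\<dots> = Dst k (\<lambda>w. \<alpha> w + \<beta> w) y" using l by (rule merge_sum)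
      finally show ?thesis by simp
    qed
    done
qed

lemma snoc_iff: "y \<noteq> [] \<Longrightarrow> (y = x @ [True]) = (last y \<and> butlast y = x)"
  by (metis append_butlast_last_id butlast_snoc last_snoc)

lemma D_single:
  assumes "odd (weight x)" "length x = k"
  shows "rz 0 (Suc k) (\<lambda>y _. Dst k (\<lambda>w. if w = x then a else 0) y)"
proof -
  have L: "bin_rz 0 (length x + 1) (\<lambda>_. replicate (length x + 1) False) (\<lambda>_. 1) (\<lambda>_. x @ [True]) (\<lambda>_. a)"
    using KL[of x a] assms by blast
  then have L': "rz (0::nat) (Suc k) (\<lambda>y xa. (if y = replicate (Suc k) False then 1 else 0) + (if y = x @ [True] then a else 0))"
    unfolding bin_rz_def using assms by simp
  show ?thesis
  proof (rule rz_cong[OF L'], goal_cases)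
    case (1 y z)
    then have "y \<noteq> []" by auto
    then show ?case unfolding Dst_def using snoc_iff[of y x] by auto
  qed
qed

lemma D_zero: "rz 0 (Suc k) (\<lambda>y _. Dst k (\<lambda>w. 0) y)"
proof (rule rz_cong[OF mono_kets0[of "Suc k", unfolded mono_rz_def, THEN conjunct1]], goal_cases)
  case (1 y x) then show ?case unfolding Dst_def by simp
qed

lemma D_sum:
  assumes "finite S" "\<forall>x\<in>S. length x = k \<and> odd (weight x)"
  shows "rz 0 (Suc k) (\<lambda>y _. Dst k (\<lambda>w. \<Sum>x\<in>S. if w = x then \<psi> x else 0) y)"
  using assms
proof (induction S rule: finite_induct)
  case empty
  then show ?case using D_zero by simp
next
  case (insert x S)
  have a: "rz 0 (Suc k) (\<lambda>y _. Dst k (\<lambda>w. if w = x then \<psi> x else 0) y)"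
    using D_single insert.prems by auto
  have b: "rz 0 (Suc k) (\<lambda>y _. Dst k (\<lambda>w. \<Sum>x\<in>S. if w = x then \<psi> x else 0) y)"
    using insert by auto
  show ?case by (rule rz_cong[OF D_add[OF a b]]) (auto simp: Dst_def insert.hyps)
qed

lemma odd_state:
  assumes "\<And>y. length y = k \<Longrightarrow> \<psi> y [] \<noteq> 0 \<Longrightarrow> odd (weight y)"
  shows "rz 0 k \<psi>"
proof -
  define S where "S = {x. length x = k \<and> odd (weight x)}"
  have fin: "finite S" unfolding S_def
    by (rule finite_subset[OF _ finite_bs[of k]]) (auto simp: bitstrings_def)
  note D = D_sum[OF fin, of k "\<lambda>x. \<psi> x []"]
  have D': "rz 0 (Suc k) (\<lambda>y _. Dst k (\<lambda>w. \<Sum>x\<in>S. if w = x then \<psi> x [] else 0) y)"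
    by (rule D) (auto simp: S_def)
  note P = rz_proj[OF D']
  show ?thesis
  proof (rule rz_cong[OF P], goal_cases)
    case (1 y x)
    then have x: "x = []" by simp
    have "True \<in> set (y @ [True])" "True \<notin> set (replicate (Suc k) False)" by simp_all
    then have ne: "y @ [True] \<noteq> replicate (Suc k) False" by metis
    have "Dst k (\<lambda>w. \<Sum>x\<in>S. if w = x then \<psi> x [] else 0) (y @ [True]) = (\<Sum>x\<in>S. if y = x then \<psi> x [] else 0)"
      unfolding Dst_def using ne by simp
    also have "\<dots> = (if y \<in> S then \<psi> y [] else 0)" using fin by (simp add: sum.delta)
    also have "\<dots> = \<psi> y x" using assms[of y] 1 x by (auto simp: S_def)
    finally show ?case .
  qed
qed

theorem theorem4p1:
  fixes n m :: nat and M :: lmap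
  assumes "pure_map n m M"
  shows "\<exists>d. wf_diag d \<and> ddom d = n \<and> dcod d = m \<and>
    (\<forall>out inp. length out = m \<longrightarrow> length inp = n \<longrightarrow> interp d out inp = M out inp)"
proof -
  define S where "S w (z::bool list) = M (take m w) (rev (drop m w))" for w z
  have SM: "S (y @ rev x) [] = M y x" if "length y = m" for y x
    using that unfolding S_def by simp
  have wsplit: "weight w = weight (take m w) + weight (rev (drop m w))" for w
    by (metis append_take_drop_id weight_append weight_rev)
  have st: "rz 0 (m + n) S"
    using assms unfolding pure_map_def
  proof
    assume o: "odd_map n m M"
    show ?thesis
    proof (rule odd_state)
      fix y assume l: "length y = m + n" and nz: "S y [] \<noteq> 0"
      have l1: "length (take m y) = m" "length (rev (drop m y)) = n" using l by auto
      have "even (weight (take m y)) \<longleftrightarrow> odd (weight (rev (drop m y)))"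
        using o[unfolded odd_map_def, rule_format, OF l1] nz unfolding S_def by blast
      then show "odd (weight y)" by (simp add: wsplit[of y] even_add)
    qed
  next
    assume e: "even_map n m M"
    define S' where "S' w (z::bool list) = (if last w then S (butlast w) [] else 0)" for w z
    have "rz 0 (Suc (m + n)) S'"
    proof (rule odd_state)
      fix y assume l: "length y = Suc (m + n)" and nz: "S' y [] \<noteq> 0"
      then have ly: "last y" "S (butlast y) [] \<noteq> 0" unfolding S'_def by (auto split: if_splits)
      have "length (butlast y) = m + n" using l by simp
      then have l1: "length (take m (butlast y)) = m" "length (rev (drop m (butlast y))) = n" by auto
      have "even (weight (take m (butlast y))) \<longleftrightarrow> even (weight (rev (drop m (butlast y))))"
        using e[unfolded even_map_def, rule_format, OF l1] ly(2) unfolding S_def by blast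
      then have "even (weight (butlast y))" by (simp add: wsplit[of "butlast y"] even_add)
      moreover have "y = butlast y @ [True]" using ly l by (metis append_butlast_last_id list.size(3) nat.distinct(1))
      ultimately show "odd (weight y)" by (metis weight_append weight_Cons weight_Nil even_Suc add_Suc_right add_0_right)
    qed
    from rz_proj[OF this] show ?thesis
      by (rule rz_cong) (simp add: S'_def)
  qed
  have "rz n m M"
    by (rule rz_cong[OF rz_bend[OF st]]) (simp add: SM)
  then show ?thesis unfolding rz_def realizes_def by blast
qed


end
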